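(* Consider the firefighter game on the infinite square grid $\mathbb{L}_2=\mathbb{Z}\times\mathbb{Z}$ (described in the context) with an arbitrary ignition vertex. Say that a firefighter sequence $(f_i)_{i\geq 1}$ of non-negative integers satisfies the Condition if there exists $N\geq 1$ with $\sum_{i=1}^N f_i\geq 4N$. (a) (Offline.) For every firefighter sequence $(f_i)_{i\geq 1}$ satisfying the Condition, Player 1, knowing the entire sequence in advance, has a strategy that wins, i.e. contains the fire. (b) (Online.) The Condition is not sufficient for Player 1 to win the online version: for every online strategy of Player 1 there exists a firefighter sequence $(f_i)_{i\geq 1}$ satisfying the Condition against which that strategy loses. Moreover, 5 turns are enough to make any online strategy of Player 1 fail: such a sequence can be chosen so that the Condition holds with some $N\leq 5$ and $f_i=0$ for all $i>5$.
   Context: The grid $\mathbb{L}_2$ has vertex set $\mathbb{Z}\times\mathbb{Z}$, with $(x,y)$ adjacent to $(x',y')$ iff $|x-x'|+|y-y'|=1$. A fire starts at an ignition vertex $v$ at time $0$ (so $v$ is burning). A firefighter sequence is a sequence $(f_i)_{i\geq 1}$ of non-negative integers. At each turn $i\geq 1$: Player 1 chooses at most $f_i$ vertices that are neither burning nor protected and protects them (places a firefighter on each); then the fire spreads from every burning vertex to all of its unprotected neighbours. Once a vertex is burning or protected it remains so forever; unused firefighters are not carried over to later turns. Player 2 wins if at every turn some new vertex starts burning; otherwise (i.e. if at some turn no new vertex catches fire, so the fire is contained) Player 1 wins. In the offline version Player 1 knows the whole sequence $(f_i)_{i\geq 1}$ in advance. In the online version the sequence is chosen by Player 2 (the adversary)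 and only revealed turn by turn: at turn $i$ Player 2 reveals $f_i$ to Player 1 just before Player 1 places firefighters, so an online strategy of Player 1 chooses its moves at turn $i$ based only on $f_1,\dots,f_i$ and the history of the game so far. *)

theory Defs
  imports Main
begin

type_synonym vtx = "int \<times> int"

definition adj :: "vtx \<Rightarrow> vtx \<Rightarrow> bool" where
  "adj p q \<longleftrightarrow> \<bar>fst p - fst q\<bar> + \<bar>snd p - snd q\<bar> = 1"

text \<open>State (burning set, protected set) after turn i, for ignition vertex v and
  a sequence of protected sets S (S i = vertices protected at turn i, i >= 1).\<close>
fun state :: "vtx \<Rightarrow> (nat \<Rightarrow> vtx set) \<Rightarrow> nat \<Rightarrow> vtx set \<times> vtx set" where
  "state v S 0 = ({v}, {})"
| "state v S (Suc i) =
     (let B = fst (state v S i); P' = snd (state v S i) \<union> S (Suc i)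
      in (B \<union> {w. w \<notin> P' \<and> (\<exists>u\<in>B. adj u w)}, P'))"

definition legal_move :: "vtx \<Rightarrow> (nat \<Rightarrow> nat) \<Rightarrow> (nat \<Rightarrow> vtx set) \<Rightarrow> nat \<Rightarrow> bool" where
  "legal_move v f S i \<longleftrightarrow>
     finite (S i) \<and> card (S i) \<le> f i \<and>
     S i \<inter> (fst (state v S (i - 1)) \<union> snd (state v S (i - 1))) = {}"

definition P1_wins :: "vtx \<Rightarrow> (nat \<Rightarrow> nat) \<Rightarrow> (nat \<Rightarrow> vtx set) \<Rightarrow> bool" where
  "P1_wins v f S \<longleftrightarrow>
     (\<exists>n\<ge>1. (\<forall>i\<in>{1..n}. legal_move v f S i) \<and>
             fst (state v S n) = fst (state v S (n - 1)))"

text \<open>The Condition: some N >= 1 with f_1 + ... + f_N >= 4N (f 0 is unused).\<close>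
definition condition :: "(nat \<Rightarrow> nat) \<Rightarrow> bool" where
  "condition f \<longleftrightarrow> (\<exists>N\<ge>1. (\<Sum>i=1..N. f i) \<ge> 4 * N)"

text \<open>An online strategy maps the revealed prefix [f_1,...,f_i] to the set protected at
  turn i (the history of the game is determined by this prefix and the strategy).\<close>
type_synonym online_strategy = "nat list \<Rightarrow> vtx set"

definition online_play :: "online_strategy \<Rightarrow> (nat \<Rightarrow> nat) \<Rightarrow> nat \<Rightarrow> vtx set" where
  "online_play \<sigma> f i = \<sigma> (map f [1..<Suc i])"

end

theory Submission
  imports Defs
begin

definition nrm :: "vtx \<Rightarrow> int" where "nrm w = \<bar>fst w\<bar> + \<bar>snd w\<bar>"

lemma st_fst: "fst (state v S (Suc i)) = fst (state v S i) \<union>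
   {w. w \<notin> snd (state v S i) \<union> S (Suc i) \<and> (\<exists>u\<in>fst (state v S i). adj u w)}"
  by (simp add: Let_def)

lemma st_snd: "snd (state v S (Suc i)) = snd (state v S i) \<union> S (Suc i)"
  by (simp add: Let_def)

declare state.simps(2)[simp del]

lemma snd_state: "snd (state v S i) = (\<Union>j\<in>{1..i}. S j)"
proof (induction i)
  case 0 then show ?case by simp
next
  case (Suc i) then show ?case by (auto simp: st_snd atLeastAtMostSuc_conv)
qed

lemma fst_mono1: "fst (state v S i) \<subseteq> fst (state v S (Suc i))"
  by (auto simp: st_fst)

lemma fst_mono: "i \<le> j \<Longrightarrow> fst (state v S i) \<subseteq> fst (state v S j)"
  by (induction j rule: dec_induct) (use fst_mono1 in blast)+

lemma v_in: "v \<in> fst (state v S i)"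
  using fst_mono[of 0 i v S] by simp

lemma adj_nrm: "adj u w \<Longrightarrow> nrm w \<le> nrm u + 1"
  by (auto simp: adj_def nrm_def)

lemma ball: "fst (state (0,0) S i) \<subseteq> {w. nrm w \<le> int i}"
proof (induction i)
  case 0 then show ?case by (simp add: nrm_def)
next
  case (Suc i)
  show ?case
  proof
    fix w assume "w \<in> fst (state (0,0) S (Suc i))"
    then consider "w \<in> fst (state (0,0) S i)" | u where "u \<in> fst (state (0,0) S i)" "adj u w"
      by (auto simp: st_fst)
    then show "w \<in> {w. nrm w \<le> int (Suc i)}"
    proof cases
      case 1 then show ?thesis using Suc by auto
    next
      case 2 then show ?thesis using Suc adj_nrm[OF 2(2)] by force
    qed
  qed
qed

lemma closure:
  assumes "fst (state v S (Suc m)) = fst (state v S m)"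
    "u \<in> fst (state v S m)" "adj u w" "w \<notin> snd (state v S (Suc m))"
  shows "w \<in> fst (state v S m)"
proof -
  have "w \<in> fst (state v S (Suc m))" using assms(2-4) by (auto simp: st_fst st_snd)
  then show ?thesis using assms(1) by simp
qed

lemma escape:
  assumes "fst (state (0,0) S (Suc m)) = fst (state (0,0) S m)"
    "p 0 \<in> fst (state (0,0) S m)" "\<And>t. adj (p t) (p (Suc t))"
    "\<And>t. p (Suc t) \<notin> snd (state (0,0) S (Suc m))" "\<And>t. int t \<le> nrm (p t)"
  shows False
proof -
  have "p t \<in> fst (state (0,0) S m)" for t
    by (induction t) (use assms(2) closure[OF assms(1) _ assms(3) assms(4)] in auto)
  then have "p (Suc m) \<in> fst (state (0,0) S m)" .
  with ball have "nrm (p (Suc m)) \<le> int m" by blast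
  with assms(5)[of "Suc m"] show False by simp
qed

definition pred :: "vtx \<Rightarrow> vtx" where
  "pred w = (if fst w > 0 then (fst w - 1, snd w) else if fst w < 0 then (fst w + 1, snd w)
     else if snd w > 0 then (fst w, snd w - 1) else (fst w, snd w + 1))"

lemma pred_props: "w \<noteq> (0,0) \<Longrightarrow> adj (pred w) w \<and> nrm (pred w) < nrm w"
  by (cases w) (auto simp: pred_def adj_def nrm_def)

lemma Glemma:
  assumes G: "\<And>w. w \<in> G \<Longrightarrow> w \<noteq> (0,0) \<Longrightarrow> pred w \<in> G"
    and P: "\<And>i. i \<le> m \<Longrightarrow> G \<inter> snd (state (0,0) S i) = {}"
  shows "i \<le> m \<Longrightarrow> w \<in> G \<Longrightarrow> nrm w \<le> int i \<Longrightarrow> w \<in> fst (state (0,0) S i)"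
proof (induction i arbitrary: w)
  case 0
  then have "w = (0,0)" by (cases w) (auto simp: nrm_def)
  then show ?case by simp
next
  case (Suc i)
  show ?case
  proof (cases "w = (0,0)")
    case True then show ?thesis using v_in by metis
  next
    case False
    have u: "pred w \<in> G" "adj (pred w) w" "nrm (pred w) < nrm w"
      using G[OF Suc.prems(2) False] pred_props[OF False] by auto
    have "pred w \<in> fst (state (0,0) S i)" using Suc.IH[OF _ u(1)] Suc.prems u(3) by simp
    moreover have "w \<notin> snd (state (0,0) S (Suc i))" using P[OF Suc.prems(1)] Suc.prems(2) by blast
    ultimately show ?thesis using u(2) by (auto simp: st_fst st_snd)
  qed
qed


definition isom :: "(vtx \<Rightarrow> vtx) \<Rightarrow> bool" where
  "isom g \<longleftrightarrow> bij g \<and> (\<forall>p q. adj (g p) (g q) = adj p q)"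

lemma state_img:
  assumes "isom g"
  shows "state (g v) (\<lambda>i. g ` S i) n = (g ` fst (state v S n), g ` snd (state v S n))"
proof (induction n)
  case 0 then show ?case by simp
next
  case (Suc n)
  have inj: "inj g" and sur: "surj g" and ad: "\<And>p q. adj (g p) (g q) = adj p q"
    using assms by (auto simp: isom_def bij_def)
  have e: "{w. w \<notin> g ` snd (state v S n) \<union> g ` S (Suc n) \<and> (\<exists>u\<in>g ` fst (state v S n). adj u w)}
     = g ` {w. w \<notin> snd (state v S n) \<union> S (Suc n) \<and> (\<exists>u\<in>fst (state v S n). adj u w)}"
  proof (intro set_eqI iffI)
    fix w assume w: "w \<in> {w. w \<notin> g ` snd (state v S n) \<union> g ` S (Suc n) \<and> (\<exists>u\<in>g ` fst (state v S n). adj u w)}"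
    obtain w0 where "w = g w0" using sur by (metis surj_def)
    then show "w \<in> g ` {w. w \<notin> snd (state v S n) \<union> S (Suc n) \<and> (\<exists>u\<in>fst (state v S n). adj u w)}"
      using w ad by auto
  next
    fix w assume "w \<in> g ` {w. w \<notin> snd (state v S n) \<union> S (Suc n) \<and> (\<exists>u\<in>fst (state v S n). adj u w)}"
    then obtain w0 where w0: "w = g w0" "w0 \<notin> snd (state v S n) \<union> S (Suc n)"
      "\<exists>u\<in>fst (state v S n). adj u w0" by blast
    have "g w0 \<notin> g ` snd (state v S n) \<union> g ` S (Suc n)"
      using w0(2) inj by (simp add: inj_image_mem_iff)
    moreover have "\<exists>u\<in>g ` fst (state v S n). adj u (g w0)"
      using w0(3) ad by blast
    ultimately show "w \<in> {w. w \<notin> g ` snd (state v S n) \<union> g ` S (Suc n) \<and> (\<exists>u\<in>g ` fst (state v S n). adj u w)}"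
      using w0(1) by simp
  qed
  have "state (g v) (\<lambda>i. g ` S i) (Suc n) = (fst (state (g v) (\<lambda>i. g ` S i) (Suc n)), snd (state (g v) (\<lambda>i. g ` S i) (Suc n)))"
    by simp
  also have "\<dots> = (g ` fst (state v S (Suc n)), g ` snd (state v S (Suc n)))"
    unfolding st_fst st_snd using Suc e by (simp add: image_Un)
  finally show ?case .
qed

lemma legal_img:
  assumes "isom g"
  shows "legal_move (g v) f (\<lambda>i. g ` S i) i = legal_move v f S i"
proof -
  have inj: "inj g" using assms by (auto simp: isom_def bij_def)
  have "g ` S i \<inter> (g ` fst (state v S (i - 1)) \<union> g ` snd (state v S (i - 1))) = g ` (S i \<inter> (fst (state v S (i - 1)) \<union> snd (state v S (i - 1))))"
    using inj by (simp add: image_Un image_Int)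
  moreover have ij: "inj_on g X" for X using inj by (metis inj_on_subset subset_UNIV)
  ultimately show ?thesis unfolding legal_move_def state_img[OF assms]
    by (simp add: finite_image_iff[OF ij] card_image[OF ij])
qed

lemma wins_img:
  assumes "isom g"
  shows "P1_wins (g v) f (\<lambda>i. g ` S i) = P1_wins v f S"
proof -
  have inj: "inj g" using assms by (auto simp: isom_def bij_def)
  show ?thesis unfolding P1_wins_def legal_img[OF assms] state_img[OF assms]
    using inj by (simp add: inj_image_eq_iff)
qed

definition rot :: "nat \<Rightarrow> vtx \<Rightarrow> vtx" where
  "rot k w = (if k = 0 then w else if k = 1 then (- snd w, fst w)
     else if k = 2 then (- fst w, - snd w) else (snd w, - fst w))"

definition gmap :: "nat \<Rightarrow> vtx \<Rightarrow> vtx \<Rightarrow> vtx" where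
  "gmap k v w = rot k (fst w - fst v, snd w - snd v)"

lemma isom_gmap: "isom (gmap k v)"
proof -
  have inj: "inj (gmap k v)"
    by (rule injI) (auto simp: gmap_def rot_def split: if_splits)
  have "surj (gmap k v)"
  proof -
    have "\<exists>x. y = gmap k v x" for y
    proof -
      obtain a b where y: "y = (a,b)" by (cases y)
      consider "k = 0" | "k = 1" | "k = 2" | "k \<noteq> 0 \<and> k \<noteq> 1 \<and> k \<noteq> 2" by blast
      then show ?thesis
      proof cases
        case 1 then show ?thesis by (intro exI[of _ "(a + fst v, b + snd v)"]) (simp add: y gmap_def rot_def)
      next
        case 2 then show ?thesis by (intro exI[of _ "(b + fst v, - a + snd v)"]) (simp add: y gmap_def rot_def)
      next
        case 3 then show ?thesis by (intro exI[of _ "(- a + fst v, - b + snd v)"]) (simp add: y gmap_def rot_def)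
      next
        case 4 then show ?thesis by (intro exI[of _ "(- b + fst v, a + snd v)"]) (simp add: y gmap_def rot_def)
      qed
    qed
    then show ?thesis by (metis surj_def)
  qed
  moreover have "adj (gmap k v p) (gmap k v q) = adj p q" for p q
    by (auto simp: gmap_def rot_def adj_def algebra_simps abs_minus_commute)
  ultimately show ?thesis using inj by (simp add: isom_def bij_def)
qed

lemma gmap_v: "gmap k v v = (0,0)" by (simp add: gmap_def rot_def)


definition sph_pt :: "nat \<Rightarrow> nat \<times> nat \<Rightarrow> vtx" where
  "sph_pt N sj = (let s = fst sj; j = int (snd sj); n = int N in
     if s = 0 then (n - j, j) else if s = 1 then (- j, n - j)
     else if s = 2 then (- (n - j), - j) else (j, - (n - j)))"

lemma sph_sub: assumes N1: "N \<ge> 1" shows "{w. nrm w = int N} \<subseteq> sph_pt N ` ({0..3} \<times> {0..<N})"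
proof
  fix w assume "w \<in> {w. nrm w = int N}"
  then obtain a b where w: "w = (a,b)" "\<bar>a\<bar> + \<bar>b\<bar> = int N" by (cases w) (auto simp: nrm_def)
  consider "a > 0" "b \<ge> 0" | "a \<le> 0" "b > 0" | "a < 0" "b \<le> 0" | "a \<ge> 0" "b < 0" | "a = 0" "b = 0"
    by linarith
  then show "w \<in> sph_pt N ` ({0..3} \<times> {0..<N})"
  proof cases
    case 1
    then have "w = sph_pt N (0, nat b)" "(0::nat, nat b) \<in> {0..3} \<times> {0..<N}" using w by (auto simp: sph_pt_def)
    then show ?thesis by blast
  next
    case 2
    then have "w = sph_pt N (1, nat (-a))" "(1::nat, nat (-a)) \<in> {0..3} \<times> {0..<N}" using w by (auto simp: sph_pt_def)
    then show ?thesis by blast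
  next
    case 3
    then have "w = sph_pt N (2, nat (-b))" "(2::nat, nat (-b)) \<in> {0..3} \<times> {0..<N}" using w by (auto simp: sph_pt_def)
    then show ?thesis by blast
  next
    case 4
    then have "w = sph_pt N (3, nat a)" "(3::nat, nat a) \<in> {0..3} \<times> {0..<N}" using w by (auto simp: sph_pt_def)
    then show ?thesis by blast
  next
    case 5
    then have "N = 0" using w by simp
    then show ?thesis using N1 by simp
  qed
qed

lemma sph_finite: "N \<ge> 1 \<Longrightarrow> finite {w. nrm w = int N}"
proof -
  assume N: "N \<ge> 1"
  have "finite (sph_pt N ` ({0..3::nat} \<times> {0..<N}))" by simp
  then show ?thesis using sph_sub[OF N] by (rule finite_subset[rotated])
qed

lemma sph_card: assumes N1: "N \<ge> 1" shows "card {w. nrm w = int N} \<le> 4 * N"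
proof -
  have "card {w. nrm w = int N} \<le> card (sph_pt N ` ({0..3} \<times> {0..<N}))"
    by (rule card_mono[OF _ sph_sub[OF N1]]) simp
  also have "\<dots> \<le> card ({0..3::nat} \<times> {0..<N})" by (rule card_image_le) simp
  also have "\<dots> = 4 * N" by (simp add: card_cartesian_product)
  finally show ?thesis .
qed

lemma psum_Suc: "(\<Sum>j=1..Suc k. f j) = (\<Sum>j=1..k. f j) + f (Suc k)"
  by (simp add: sum.cl_ivl_Suc)

lemma psum_mono: fixes f :: "nat \<Rightarrow> nat" shows "i \<le> j \<Longrightarrow> (\<Sum>l=1..i. f l) \<le> (\<Sum>l=1..j. f l)"
  by (rule sum_mono2) auto

lemma union_ivl: fixes f :: "nat \<Rightarrow> nat" shows "(\<Union>j\<in>{1..k}. {(\<Sum>l=1..j-1. f l) ..< (\<Sum>l=1..j. (f l::nat))}) = {0..<(\<Sum>l=1..k. f l)}"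
proof (induction k)
  case 0 then show ?case by simp
next
  case (Suc k)
  have "{1..Suc k} = insert (Suc k) {1..k}" by auto
  then show ?case using Suc psum_mono[of k "Suc k" f] by (auto simp: psum_Suc)
qed

lemma part_a0:
  assumes N: "N \<ge> 1" and sumN: "(\<Sum>i=1..N. f i) \<ge> 4 * N"
  shows "\<exists>S. P1_wins (0,0) f S"
proof -
  define Sph where "Sph = {w. nrm w = int N}"
  define M where "M = card Sph"
  have fin: "finite Sph" unfolding Sph_def by (rule sph_finite[OF N])
  obtain h where h: "bij_betw h {0..<M} Sph" using ex_bij_betw_nat_finite[OF fin] M_def by blast
  have hinj: "inj_on h {0..<M}" and him: "h ` {0..<M} = Sph" using h by (auto simp: bij_betw_def)
  define ps where "ps i = (\<Sum>l=1..i. f l)" for i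
  define S where "S i = h ` ({ps (i - 1) ..< ps i} \<inter> {0..<M})" for i
  have MN: "M \<le> ps N" using sph_card[OF N] sumN unfolding M_def Sph_def ps_def by linarith
  have Ssub: "S i \<subseteq> Sph" for i using him unfolding S_def by auto
  have Sfin: "finite (S i)" for i unfolding S_def by simp
  have Scard: "card (S i) \<le> f i" if i1: "i \<ge> 1" for i
  proof -
    obtain k where k: "i = Suc k" using i1 by (cases i) auto
    have "card (S i) \<le> card ({ps (i - 1) ..< ps i} \<inter> {0..<M})" unfolding S_def by (rule card_image_le) simp
    also have "\<dots> \<le> card {ps (i - 1) ..< ps i}" by (rule card_mono) auto
    also have "\<dots> = f i" using k by (simp add: ps_def psum_Suc)
    finally show ?thesis .
  qed
  have Sdisj: "S j \<inter> S i = {}" if "1 \<le> j" "j < i" for i j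
  proof -
    have "ps j \<le> ps (i - 1)" unfolding ps_def by (rule psum_mono) (use that in auto)
    then have "({ps (j - 1) ..< ps j} \<inter> {0..<M}) \<inter> ({ps (i - 1) ..< ps i} \<inter> {0..<M}) = {}" by auto
    then show ?thesis unfolding S_def using hinj
      by (simp add: inj_on_image_Int[symmetric, OF hinj] del: Int_atLeastLessThan)
  qed
  have Sunion: "(\<Union>j\<in>{1..N}. S j) = Sph"
  proof -
    have "(\<Union>j\<in>{1..N}. S j) = h ` (\<Union>j\<in>{1..N}. {ps (j - 1) ..< ps j} \<inter> {0..<M})"
      unfolding S_def by auto
    also have "(\<Union>j\<in>{1..N}. {ps (j - 1) ..< ps j} \<inter> {0..<M}) = {0..<ps N} \<inter> {0..<M}"
      using union_ivl[of f N] unfolding ps_def by blast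
    also have "\<dots> = {0..<M}" using MN by auto
    finally show ?thesis using him by simp
  qed
  have Psub: "snd (state (0,0) S i) \<subseteq> Sph" for i using Ssub by (auto simp: snd_state)
  define G where "G = {w. nrm w \<le> int N - 1}"
  have GP: "G \<inter> snd (state (0,0) S i) = {}" for i using Psub[of i] by (auto simp: G_def Sph_def)
  have Gpred: "pred w \<in> G" if "w \<in> G" "w \<noteq> (0,0)" for w
    using pred_props[OF that(2)] that(1) by (auto simp: G_def)
  have Bball: "fst (state (0,0) S (N - 1)) = G"
  proof
    show "fst (state (0,0) S (N - 1)) \<subseteq> G" using ball[of S "N - 1"] N by (auto simp: G_def)
    show "G \<subseteq> fst (state (0,0) S (N - 1))"
      using Glemma[OF Gpred GP, of "N - 1" "N - 1"] N by (auto simp: G_def)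
  qed
  have legal: "legal_move (0,0) f S i" if "i \<in> {1..N}" for i
  proof -
    have "S i \<inter> fst (state (0,0) S (i - 1)) = {}"
      using ball[of S "i - 1"] Ssub[of i] that by (force simp: Sph_def)
    moreover have "S i \<inter> snd (state (0,0) S (i - 1)) = {}"
    proof -
      have "S x \<inter> S i = {}" if "x \<in> {1..i - 1}" for x
      proof -
        have "1 \<le> x" "x < i" using that by auto
        then show ?thesis by (rule Sdisj)
      qed
      then show ?thesis unfolding snd_state by blast
    qed
    ultimately show ?thesis unfolding legal_move_def using Sfin Scard that by auto
  qed
  have stop: "fst (state (0,0) S N) = fst (state (0,0) S (N - 1))"
  proof -
    obtain m where m: "N = Suc m" using N by (cases N) auto
    have PN: "snd (state (0,0) S N) = Sph" using Sunion by (simp add: snd_state)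
    have "w \<in> G" if "w \<notin> snd (state (0,0) S m) \<union> S (Suc m)" "u \<in> fst (state (0,0) S m)" "adj u w" for u w
    proof -
      have "nrm u \<le> int m" using ball[of S m] that(2) by auto
      then have "nrm w \<le> int N" using adj_nrm[OF that(3)] m by simp
      moreover have "w \<notin> Sph" using that(1) PN m by (auto simp add: st_snd)
      ultimately show ?thesis by (auto simp: G_def Sph_def)
    qed
    then have "fst (state (0,0) S (Suc m)) = fst (state (0,0) S m)"
      using Bball m unfolding st_fst by auto
    then show ?thesis using m by simp
  qed
  show ?thesis unfolding P1_wins_def using N legal stop by blast
qed


definition lab :: "vtx \<Rightarrow> int \<times> int" where
  "lab w = (let a = fst w; b = snd w in
     if a \<ge> 1 \<and> b \<ge> 0 then (0, b) else if a \<le> 0 \<and> b \<ge> 1 then (1, - a)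
     else if a \<le> -1 \<and> b \<le> 0 then (2, - b) else (3, a))"

definition LL :: "nat \<Rightarrow> (int \<times> int) set" where
  "LL K = {0..3} \<times> {0..int K - 1}"

lemma card_LL: "card (LL K) = 4 * K"
  by (simp add: LL_def card_cartesian_product)

definition stdp :: "nat \<Rightarrow> int \<times> int \<Rightarrow> nat \<Rightarrow> vtx" where
  "stdp K l t = (let s = fst l; k = snd l; r = int K - 1 - k + int t in
     if s = 0 then (r, k) else if s = 1 then (- k, r) else if s = 2 then (- r, - k) else (k, - r))"

lemma stdp_props:
  assumes "l \<in> LL K"
  shows "adj (stdp K l t) (stdp K l (Suc t))" "lab (stdp K l (Suc t)) = l"
    "nrm (stdp K l t) = int K - 1 + int t"
proof -
  obtain s k where l: "l = (s,k)" "0 \<le> s" "s \<le> 3" "0 \<le> k" "k \<le> int K - 1"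
    using assms by (cases l) (auto simp: LL_def)
  have "s = 0 \<or> s = 1 \<or> s = 2 \<or> s = 3" using l by linarith
  then show "adj (stdp K l t) (stdp K l (Suc t))" "lab (stdp K l (Suc t)) = l"
    "nrm (stdp K l t) = int K - 1 + int t"
    using l by (auto simp: stdp_def adj_def lab_def nrm_def Let_def)
qed

definition G3 :: "vtx set" where "G3 = {w. nrm w \<le> 2 \<and> w \<noteq> (1,1)}"
definition G4 :: "vtx set" where "G4 = {w. nrm w \<le> 3 \<and> \<not> (fst w \<ge> 1 \<and> snd w = 0)}"
definition G5 :: "vtx set" where "G5 = {w. nrm w \<le> 4 \<and> \<not> (fst w \<ge> 2 \<and> snd w = 0)}"
definition G2 :: "vtx set" where "G2 = {w. nrm w \<le> 1}"

lemma G3_pred: "w \<in> G3 \<Longrightarrow> w \<noteq> (0,0) \<Longrightarrow> pred w \<in> G3"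
  by (cases w) (auto simp: G3_def pred_def nrm_def)
lemma G4_pred: "w \<in> G4 \<Longrightarrow> w \<noteq> (0,0) \<Longrightarrow> pred w \<in> G4"
  by (cases w) (auto simp: G4_def pred_def nrm_def)
lemma G5_pred: "w \<in> G5 \<Longrightarrow> w \<noteq> (0,0) \<Longrightarrow> pred w \<in> G5"
  by (cases w) (auto simp: G5_def pred_def nrm_def)
lemma G2_pred: "w \<in> G2 \<Longrightarrow> w \<noteq> (0,0) \<Longrightarrow> pred w \<in> G2"
  using pred_props[of w] by (auto simp: G2_def)

definition famprop :: "nat \<Rightarrow> vtx set \<Rightarrow> vtx \<Rightarrow> (int \<times> int) \<Rightarrow> (nat \<Rightarrow> vtx) \<Rightarrow> bool" where
  "famprop K G x l p \<longleftrightarrow> p 0 \<in> G \<and> nrm (p 0) \<le> int K - 1 \<and> (\<forall>t. adj (p t) (p (Suc t))) \<and>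
     (\<forall>t. lab (p (Suc t)) = l \<and> p (Suc t) \<noteq> x) \<and> (\<forall>t. int t \<le> nrm (p t))"

lemma std_fam:
  assumes "l \<in> LL K" "K \<ge> 1" "stdp K l 0 \<in> G" "nrm x < int K"
  shows "famprop K G x l (stdp K l)"
  using stdp_props[OF assms(1)] assms(2-4) unfolding famprop_def by fastforce

lemma fam3: "l \<in> LL 3 \<Longrightarrow> \<exists>p. famprop 3 G3 (1,1) l p"
proof (cases "l = (0,1)")
  case True
  let ?p = "\<lambda>t::nat. if t = 0 then (2::int, 0::int) else (1 + int t, 1)"
  have "famprop 3 G3 (1,1) l ?p" using True
    by (auto simp: famprop_def G3_def nrm_def adj_def lab_def)
  then show ?thesis by blast
next
  case False
  assume l: "l \<in> LL 3"
  have "stdp 3 l 0 \<in> G3"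
    using stdp_props(3)[OF l, of 0] l False by (auto simp: G3_def stdp_def LL_def Let_def)
  have "famprop 3 G3 (1,1) l (stdp 3 l)" by (rule std_fam[OF l]) (use \<open>stdp 3 l 0 \<in> G3\<close> in \<open>auto simp: nrm_def\<close>)
  then show ?thesis by blast
qed

lemma fam4: "l \<in> LL 4 \<Longrightarrow> \<exists>p. famprop 4 G4 (1,0) l p"
proof -
  assume l: "l \<in> LL 4"
  consider "l = (0,0)" | "l = (3,3)" | "l \<noteq> (0,0) \<and> l \<noteq> (3,3)" by blast
  then show ?thesis
  proof cases
    case 1
    let ?p = "\<lambda>t::nat. if t = 0 then (2::int, 1::int) else (1 + int t, 0)"
    have "famprop 4 G4 (1,0) l ?p" using 1
      by (auto simp: famprop_def G4_def nrm_def adj_def lab_def)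
    then show ?thesis by blast
  next
    case 2
    let ?p = "\<lambda>t::nat. if t = 0 then (2::int, -1::int) else (3, - int t)"
    have "famprop 4 G4 (1,0) l ?p" using 2
      by (auto simp: famprop_def G4_def nrm_def adj_def lab_def)
    then show ?thesis by blast
  next
    case 3
    have "stdp 4 l 0 \<in> G4"
      using stdp_props(3)[OF l, of 0] l 3 by (auto simp: G4_def stdp_def LL_def Let_def)
    have "famprop 4 G4 (1,0) l (stdp 4 l)" by (rule std_fam[OF l]) (use \<open>stdp 4 l 0 \<in> G4\<close> in \<open>auto simp: nrm_def\<close>)
    then show ?thesis by blast
  qed
qed

lemma fam5: "l \<in> LL 5 \<Longrightarrow> \<exists>p. famprop 5 G5 (2,0) l p"
proof -
  assume l: "l \<in> LL 5"
  consider "l = (0,0)" | "l = (3,4)" | "l \<noteq> (0,0) \<and> l \<noteq> (3,4)" by blast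
  then show ?thesis
  proof cases
    case 1
    let ?p = "\<lambda>t::nat. if t = 0 then (3::int, 1::int) else (2 + int t, 0)"
    have "famprop 5 G5 (2,0) l ?p" using 1
      by (auto simp: famprop_def G5_def nrm_def adj_def lab_def)
    then show ?thesis by blast
  next
    case 2
    let ?p = "\<lambda>t::nat. if t = 0 then (3::int, -1::int) else (4, - int t)"
    have "famprop 5 G5 (2,0) l ?p" using 2
      by (auto simp: famprop_def G5_def nrm_def adj_def lab_def)
    then show ?thesis by blast
  next
    case 3
    have "stdp 5 l 0 \<in> G5"
      using stdp_props(3)[OF l, of 0] l 3 by (auto simp: G5_def stdp_def LL_def Let_def)
    have "famprop 5 G5 (2,0) l (stdp 5 l)" by (rule std_fam[OF l]) (use \<open>stdp 5 l 0 \<in> G5\<close> in \<open>auto simp: nrm_def\<close>)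
    then show ?thesis by blast
  qed
qed

lemma fam2: "l \<in> LL 2 \<Longrightarrow> famprop 2 G2 (0,0) l (stdp 2 l)"
proof -
  assume l: "l \<in> LL 2"
  have "stdp 2 l 0 \<in> G2" using stdp_props(3)[OF l, of 0] by (simp add: G2_def)
  show ?thesis by (rule std_fam[OF l _ \<open>stdp 2 l 0 \<in> G2\<close>]) (auto simp: nrm_def)
qed


lemma fam_contra:
  assumes stop: "fst (state (0,0) S (Suc m)) = fst (state (0,0) S m)"
    and P: "snd (state (0,0) S (Suc m)) \<subseteq> X \<union> Y"
    and fam: "\<And>l. l \<in> L \<Longrightarrow> \<exists>p. p 0 \<in> fst (state (0,0) S m) \<and> (\<forall>t. adj (p t) (p (Suc t))) \<and>
         (\<forall>t. lab (p (Suc t)) = l \<and> p (Suc t) \<notin> X) \<and> (\<forall>t. int t \<le> nrm (p t))"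
  shows "L \<subseteq> lab ` Y"
proof
  fix l assume l: "l \<in> L"
  show "l \<in> lab ` Y"
  proof (rule ccontr)
    assume nl: "l \<notin> lab ` Y"
    obtain p where p: "p 0 \<in> fst (state (0,0) S m)" "\<And>t. adj (p t) (p (Suc t))"
      "\<And>t. lab (p (Suc t)) = l" "\<And>t. p (Suc t) \<notin> X" "\<And>t. int t \<le> nrm (p t)"
      using fam[OF l] by blast
    have "p (Suc t) \<notin> snd (state (0,0) S (Suc m))" for t
      using P p(3,4)[of t] nl by force
    then show False using escape[OF stop p(1) p(2) _ p(5)] by blast
  qed
qed

lemma bigK:
  assumes stop: "fst (state (0,0) S (Suc m)) = fst (state (0,0) S m)"
    and P: "snd (state (0,0) S (Suc m)) \<subseteq> {x} \<union> Y"
    and Y: "finite Y" "card Y \<le> 4 * K - 1" and K: "K \<ge> 1"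
    and fam: "\<And>l. l \<in> LL K \<Longrightarrow> \<exists>p. famprop K G x l p"
    and GB: "\<And>w. w \<in> G \<Longrightarrow> nrm w \<le> int K - 1 \<Longrightarrow> w \<in> fst (state (0,0) S m)"
  shows False
proof -
  have "LL K \<subseteq> lab ` Y"
  proof (rule fam_contra[OF stop P])
    fix l assume "l \<in> LL K"
    then obtain p where "famprop K G x l p" using fam by blast
    then show "\<exists>p. p 0 \<in> fst (state (0,0) S m) \<and> (\<forall>t. adj (p t) (p (Suc t))) \<and>
         (\<forall>t. lab (p (Suc t)) = l \<and> p (Suc t) \<notin> {x}) \<and> (\<forall>t. int t \<le> nrm (p t))"
      using GB unfolding famprop_def by blast
  qed
  then have "card (LL K) \<le> card (lab ` Y)" by (rule card_mono[rotated]) (use Y in simp)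
  also have "\<dots> \<le> card Y" by (rule card_image_le[OF Y(1)])
  finally show False using card_LL[of K] Y K by linarith
qed

definition fseq :: "nat \<Rightarrow> nat \<Rightarrow> nat" where
  "fseq K i = (if i = 1 then 1 else if i = K then 4 * K - 1 else 0)"

definition kind :: "vtx \<Rightarrow> nat" where
  "kind w = (if nrm w = 1 then 4 else if \<bar>fst w\<bar> = 1 \<and> \<bar>snd w\<bar> = 1 then 3
     else if nrm w = 2 then 5 else 2)"


lemma kind_cases:
  assumes "fst x \<ge> 1" "snd x \<ge> 0"
  shows "(kind x = 4 \<and> x = (1,0)) \<or> (kind x = 3 \<and> x = (1,1)) \<or> (kind x = 5 \<and> x = (2,0)) \<or> (kind x = 2 \<and> nrm x \<ge> 3)"
  using assms by (cases x) (auto simp: kind_def nrm_def)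

lemma core:
  assumes x: "S 1 \<subseteq> {x}" "1 \<le> fst x" "0 \<le> snd x" "K = kind x"
  shows "\<not> P1_wins (0,0) (fseq K) S"
proof
  assume "P1_wins (0,0) (fseq K) S"
  then obtain n where n: "n \<ge> 1" "\<forall>i\<in>{1..n}. legal_move (0,0) (fseq K) S i"
    "fst (state (0,0) S n) = fst (state (0,0) S (n-1))" unfolding P1_wins_def by blast
  obtain m where nm: "n = Suc m" using n(1) by (cases n) auto
  have stop: "fst (state (0,0) S (Suc m)) = fst (state (0,0) S m)" using n(3) nm by simp
  have K25: "2 \<le> K" "K \<le> 5" using x(4) by (auto simp: kind_def)
  have Semp: "S j = {}" if "j \<in> {1..n}" "j \<noteq> 1" "j \<noteq> K" for j
  proof -
    have "legal_move (0,0) (fseq K) S j" using n(2) that(1) by blast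
    then have "finite (S j)" "card (S j) \<le> 0" using that by (auto simp: legal_move_def fseq_def)
    then show ?thesis by simp
  qed
  have P_le: "snd (state (0,0) S i) \<subseteq> S 1 \<union> (if K \<le> i then S K else {})" if "i \<le> n" for i
  proof
    fix w assume "w \<in> snd (state (0,0) S i)"
    then obtain j where j: "j \<in> {1..i}" "w \<in> S j" by (auto simp: snd_state)
    have "j = 1 \<or> j = K"
    proof (rule ccontr)
      assume "\<not> (j = 1 \<or> j = K)"
      then have "S j = {}" using Semp[of j] j(1) that by auto
      then show False using j(2) by simp
    qed
    then show "w \<in> S 1 \<union> (if K \<le> i then S K else {})" using j by auto
  qed
  show False
  proof (cases "K \<le> n")
    case False
    have Pn: "snd (state (0,0) S (Suc m)) \<subseteq> {x}" using P_le[of n] False x(1) nm by auto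
    let ?p = "\<lambda>t::nat. (- int t, 0::int)"
    have "?p (Suc t) \<notin> snd (state (0,0) S (Suc m))" for t using Pn x(2) by auto
    moreover have "adj (?p t) (?p (Suc t))" for t by (simp add: adj_def)
    moreover have "int t \<le> nrm (?p t)" for t by (simp add: nrm_def)
    ultimately show False using escape[OF stop, of ?p] v_in by auto
  next
    case True
    have "legal_move (0,0) (fseq K) S K" using n(2) True K25 by auto
    then have legK: "finite (S K)" "card (S K) \<le> 4 * K - 1"
      using K25 by (auto simp: legal_move_def fseq_def)
    have Pn: "snd (state (0,0) S (Suc m)) \<subseteq> {x} \<union> S K" using P_le[of n] x(1) nm True by auto
    have GB: "w \<in> fst (state (0,0) S m)"
      if G: "\<And>w. w \<in> G \<Longrightarrow> w \<noteq> (0,0) \<Longrightarrow> pred w \<in> G" and xG: "x \<notin> G"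
        and w: "w \<in> G" "nrm w \<le> int K - 1" for G w
    proof -
      have "G \<inter> snd (state (0,0) S i) = {}" if "i \<le> K - 1" for i
      proof -
        have "i \<le> n" "\<not> K \<le> i" using that K25 True by auto
        then have "snd (state (0,0) S i) \<subseteq> {x}" using P_le[of i] x(1) by auto
        then show ?thesis using xG by auto
      qed
      then have "w \<in> fst (state (0,0) S (K - 1))"
        using Glemma[OF G, of "K - 1" S "K - 1" w] w K25 by auto
      moreover have "K - 1 \<le> m" using True nm by simp
      ultimately show ?thesis using fst_mono by blast
    qed
    consider "kind x = 4" "x = (1,0)" | "kind x = 3" "x = (1,1)" | "kind x = 5" "x = (2,0)"
      | "kind x = 2" "nrm x \<ge> 3"
      using kind_cases[OF x(2,3)] by blast
    then show False
    proof cases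
      case 1
      have KK: "K = 4" using 1 x(4) by simp
      have xG: "x \<notin> G4" using 1 by (simp add: G4_def nrm_def)
      have GBK: "w \<in> fst (state (0,0) S m)" if "w \<in> G4" "nrm w \<le> int 4 - 1" for w
        using GB[of G4 w, OF G4_pred xG] that KK by auto
      have cK: "card (S K) \<le> 4 * 4 - 1" using legK KK by simp
      show False by (rule bigK[OF stop Pn[unfolded 1(2)] legK(1) cK _ fam4 GBK]) auto
    next
      case 2
      have KK: "K = 3" using 2 x(4) by simp
      have xG: "x \<notin> G3" using 2 by (simp add: G3_def nrm_def)
      have GBK: "w \<in> fst (state (0,0) S m)" if "w \<in> G3" "nrm w \<le> int 3 - 1" for w
        using GB[of G3 w, OF G3_pred xG] that KK by auto
      have cK: "card (S K) \<le> 4 * 3 - 1" using legK KK by simp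
      show False by (rule bigK[OF stop Pn[unfolded 2(2)] legK(1) cK _ fam3 GBK]) auto
    next
      case 3
      have KK: "K = 5" using 3 x(4) by simp
      have xG: "x \<notin> G5" using 3 by (simp add: G5_def nrm_def)
      have GBK: "w \<in> fst (state (0,0) S m)" if "w \<in> G5" "nrm w \<le> int 5 - 1" for w
        using GB[of G5 w, OF G5_pred xG] that KK by auto
      have cK: "card (S K) \<le> 4 * 5 - 1" using legK KK by simp
      show False by (rule bigK[OF stop Pn[unfolded 3(2)] legK(1) cK _ fam5 GBK]) auto
    next
      case 4
      have K2: "K = 2" using 4 x(4) by simp
      have xG2: "x \<notin> G2" using 4 by (auto simp: G2_def)
      define P where "P = snd (state (0,0) S (Suc m))"
      have L: "LL 2 \<subseteq> lab ` P"
      proof (rule fam_contra[OF stop, of "{}"])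
        show "snd (state (0,0) S (Suc m)) \<subseteq> {} \<union> P" by (simp add: P_def)
        fix l assume l: "l \<in> LL 2"
        have fp: "famprop 2 G2 (0,0) l (stdp 2 l)" by (rule fam2[OF l])
        then have "stdp 2 l 0 \<in> fst (state (0,0) S m)"
          using GB[OF G2_pred xG2] K2 unfolding famprop_def by auto
        then show "\<exists>p. p 0 \<in> fst (state (0,0) S m) \<and> (\<forall>t. adj (p t) (p (Suc t))) \<and>
         (\<forall>t. lab (p (Suc t)) = l \<and> p (Suc t) \<notin> {}) \<and> (\<forall>t. int t \<le> nrm (p t))"
          using fp unfolding famprop_def by blast
      qed
      have Psub: "P \<subseteq> {x} \<union> S 2" using Pn K2 by (simp add: P_def)
      have finP: "finite P" using Psub legK K2 by (auto intro: finite_subset)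
      have "card P \<le> card ({x} \<union> S 2)" using Psub legK K2 by (intro card_mono) auto
      also have "\<dots> \<le> card {x} + card (S 2)" by (rule card_Un_le)
      finally have cP: "card P \<le> 8" using legK K2 by simp
      have c8: "8 \<le> card (lab ` P)" using card_mono[OF _ L] finP card_LL[of 2] by simp
      have cimg: "card (lab ` P) \<le> card P" by (rule card_image_le[OF finP])
      have injP: "inj_on lab P" using c8 cimg cP finP by (simp add: inj_on_iff_eq_card)
      have labP: "lab ` P = LL 2"
        using card_subset_eq[OF _ L] finP c8 cimg cP card_LL[of 2] by simp
      have xP: "x \<in> P"
      proof (rule ccontr)
        assume "x \<notin> P"
        then have "P \<subseteq> S 2" using Psub by auto
        then have "card P \<le> card (S 2)" using legK K2 by (intro card_mono) auto
        then show False using c8 cimg legK K2 by simp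
      qed
      have notP: "y \<notin> P" if "lab y \<notin> LL 2 \<or> (lab y = lab x \<and> y \<noteq> x)" for y
        using that labP injP xP by (auto simp: inj_on_def)
      have labx: "lab x = (0, snd x)" using x(2,3) by (simp add: lab_def Let_def)
      have "lab x \<in> LL 2" using labP xP by blast
      then have sx: "snd x = 0 \<or> snd x = 1" using labx by (auto simp: LL_def)
      have start1: "(1,0) \<in> fst (state (0,0) S m)" "(0,1) \<in> fst (state (0,0) S m)"
        using GB[OF G2_pred xG2, of "(1,0)"] GB[OF G2_pred xG2, of "(0,1)"] K2
        by (auto simp: G2_def nrm_def)
      show False
      proof (cases "snd x = 0")
        case True
        let ?p = "\<lambda>t::nat. if t = 0 then (1::int, 0::int) else if t = 1 then (2, 0) else (2, 1 - int t)"
        have "?p (Suc t) \<notin> P" for t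
        proof (cases t)
          case 0
          have "lab (2,0) = lab x" "(2::int,0::int) \<noteq> x" using labx True 4 by (auto simp: lab_def nrm_def)
          then show ?thesis using notP 0 by auto
        next
          case (Suc t')
          have "lab (2, 1 - int (Suc t)) \<notin> LL 2" using Suc by (simp add: lab_def LL_def)
          then show ?thesis using notP Suc by auto
        qed
        moreover have "adj (?p t) (?p (Suc t))" for t by (simp add: adj_def)
        moreover have "int t \<le> nrm (?p t)" for t by (simp add: nrm_def)
        ultimately show False using escape[OF stop, of ?p] start1 by (auto simp: P_def)
      next
        case False
        then have sx1: "snd x = 1" using sx by simp
        let ?p = "\<lambda>t::nat. if t = 0 then (0::int, 1::int) else (1, int t)"
        have "?p (Suc t) \<notin> P" for t
        proof (cases t)
          case 0
          have "lab (1,1) = lab x" "(1::int,1::int) \<noteq> x" using labx sx1 4 by (auto simp: lab_def nrm_def)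
          then show ?thesis using notP 0 by auto
        next
          case (Suc t')
          have "lab (1, int (Suc t)) \<notin> LL 2" using Suc by (simp add: lab_def LL_def)
          then show ?thesis using notP Suc by auto
        qed
        moreover have "adj (?p t) (?p (Suc t))" for t by (simp add: adj_def)
        moreover have "int t \<le> nrm (?p t)" for t by (simp add: nrm_def)
        ultimately show False using escape[OF stop, of ?p] start1 by (auto simp: P_def)
      qed
    qed
  qed
qed


lemma kind_rot: "kind (rot k d) = kind d"
  by (auto simp: kind_def rot_def nrm_def)

lemma exists_rot: "d \<noteq> (0,0) \<Longrightarrow> \<exists>k. fst (rot k d) \<ge> 1 \<and> snd (rot k d) \<ge> 0"
proof -
  assume d: "d \<noteq> (0,0)"
  obtain a b where ab: "d = (a,b)" by (cases d)
  consider "a \<ge> 1 \<and> b \<ge> 0" | "b \<le> -1 \<and> a \<ge> 0" | "a \<le> -1 \<and> b \<le> 0" | "b \<ge> 1 \<and> a \<le> 0"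
    using d ab by fastforce
  then show ?thesis
  proof cases
    case 1 then show ?thesis by (intro exI[of _ 0]) (simp add: rot_def ab)
  next
    case 2 then show ?thesis by (intro exI[of _ 1]) (simp add: rot_def ab)
  next
    case 3 then show ?thesis by (intro exI[of _ 2]) (simp add: rot_def ab)
  next
    case 4 then show ?thesis by (intro exI[of _ 3]) (simp add: rot_def ab)
  qed
qed

lemma fseq_sum: "K \<in> {2,3,4,5} \<Longrightarrow> (\<Sum>i=1..K. fseq K i) = 4 * K"
  by (auto simp: fseq_def numeral_eq_Suc atLeastAtMostSuc_conv)

theorem theorem1:
  shows "(\<forall>v f. condition f \<longrightarrow> (\<exists>S. P1_wins v f S)) \<and>
         (\<forall>v (\<sigma>::online_strategy). \<exists>f. condition f \<and>
             (\<exists>N. 1 \<le> N \<and> N \<le> 5 \<and> (\<Sum>i=1..N. f i) \<ge> 4 * N) \<and>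
             (\<forall>i>5. f i = 0) \<and>
             \<not> P1_wins v f (online_play \<sigma> f))"
proof (intro conjI allI impI)
  fix v and f :: "nat \<Rightarrow> nat"
  assume "condition f"
  then obtain N where N: "N \<ge> 1" "(\<Sum>i=1..N. f i) \<ge> 4 * N" unfolding condition_def by blast
  obtain S0 where S0: "P1_wins (0,0) f S0" using part_a0[OF N] by blast
  let ?g = "gmap 0 (- fst v, - snd v)"
  have "?g (0,0) = v" by (simp add: gmap_def rot_def)
  then have "P1_wins v f (\<lambda>i. ?g ` S0 i)" using wins_img[OF isom_gmap, of 0 "(- fst v, - snd v)" "(0,0)" f S0] S0
    by simp
  then show "\<exists>S. P1_wins v f S" by blast
next
  fix v and \<sigma> :: online_strategy
  define X where "X = \<sigma> [1]"
  define Kc where "Kc = (if (\<exists>x. X = {x} \<and> x \<noteq> v) then kind (fst (the_elem X) - fst v, snd (the_elem X) - snd v) else 2)"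
  define f where "f = fseq Kc"
  have K25: "Kc \<in> {2,3,4,5}" unfolding Kc_def kind_def by auto
  have sumK: "(\<Sum>i=1..Kc. f i) = 4 * Kc" unfolding f_def by (rule fseq_sum[OF K25])
  have cond: "condition f" unfolding condition_def using sumK K25 by (intro exI[of _ Kc]) auto
  have ex: "\<exists>N. 1 \<le> N \<and> N \<le> 5 \<and> (\<Sum>i=1..N. f i) \<ge> 4 * N" using sumK K25 by (intro exI[of _ Kc]) auto
  have zero: "\<forall>i>5. f i = 0" using K25 by (auto simp: f_def fseq_def)
  define S where "S = online_play \<sigma> f"
  have S1: "S 1 = X" by (simp add: S_def online_play_def X_def f_def fseq_def)
  have notwin: "\<not> P1_wins v f S"
  proof (cases "legal_move v f S 1")
    case False
    then show ?thesis unfolding P1_wins_def by auto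
  next
    case True
    then have Xl: "finite X" "card X \<le> 1" "v \<notin> X" using S1 by (auto simp: legal_move_def f_def fseq_def)
    have "X = {} \<or> (\<exists>x. X = {x} \<and> x \<noteq> v)"
    proof (cases "X = {}")
      case False
      then have "card X = 1" using Xl by (simp add: Suc_le_eq card_gt_0_iff le_antisym)
      then obtain x where "X = {x}" by (auto simp: card_Suc_eq)
      then show ?thesis using Xl by auto
    qed simp
    then show ?thesis
    proof
      assume X0: "X = {}"
      then have Kc2: "Kc = 2" by (simp add: Kc_def)
      let ?g = "gmap 0 v"
      have "\<not> P1_wins (0,0) (fseq (kind (5,0))) (\<lambda>i. ?g ` S i)"
      proof (rule core)
        have "S 1 = {}" using S1 X0 by simp
        then show "(\<lambda>i. ?g ` S i) 1 \<subseteq> {(5,0)}" by simp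
      qed (auto simp: kind_def nrm_def)
      moreover have "kind (5,0) = 2" by (simp add: kind_def nrm_def)
      ultimately show ?thesis using wins_img[OF isom_gmap, of 0 v v f S] gmap_v[of 0 v] Kc2 f_def
        by simp
    next
      assume "\<exists>x. X = {x} \<and> x \<noteq> v"
      then obtain x where x: "X = {x}" "x \<noteq> v" by blast
      define d where "d = (fst x - fst v, snd x - snd v)"
      have Kd: "Kc = kind d" using x by (auto simp: Kc_def d_def)
      have "d \<noteq> (0,0)" using x(2) by (auto simp: d_def prod_eq_iff)
      then obtain k where k: "fst (rot k d) \<ge> 1" "snd (rot k d) \<ge> 0" using exists_rot by blast
      let ?g = "gmap k v"
      have gx: "?g x = rot k d" by (simp add: gmap_def d_def)
      have "\<not> P1_wins (0,0) (fseq (kind (rot k d))) (\<lambda>i. ?g ` S i)"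
      proof (rule core)
        have "S 1 = {x}" using S1 x by simp
        then show "(\<lambda>i. ?g ` S i) 1 \<subseteq> {rot k d}" using gx by simp
      qed (use k in auto)
      then show ?thesis using wins_img[OF isom_gmap, of k v v f S] gmap_v[of k v] Kd kind_rot f_def
        by simp
    qed
  qed
  show "\<exists>f. condition f \<and> (\<exists>N. 1 \<le> N \<and> N \<le> 5 \<and> (\<Sum>i=1..N. f i) \<ge> 4 * N) \<and>
             (\<forall>i>5. f i = 0) \<and> \<not> P1_wins v f (online_play \<sigma> f)"
    using cond ex zero notwin unfolding S_def by blast
qed

end
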